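(* Let $m\ge 1$, $M=2^m$, and let $P_{C_0}(0),\ldots,P_{C_{m-1}}(0)\in(0,1)$ be given, with $P_{C_k}(1)=1-P_{C_k}(0)$. Then for all $j,l\in\{0,\ldots,M-1\}$, $$\sum_{i=0}^{M-1}\gamma_{i,l}\gamma_{i,j}=\begin{cases}M,& j=l,\\ 0,& j\neq l,\end{cases}\qquad\text{and}\qquad \sum_{i=0}^{M-1}h_{l,i}\gamma_{i,j}=M\,h_{j,l}\sqrt{P_{j\oplus l}}.$$
   Context: For an integer $0\le i\le M-1$, $n_{i,k}\in\{0,1\}$ denotes the $k$-th bit of its base-2 representation, i.e. $i=\sum_{k=0}^{m-1}n_{i,k}2^k$; for a bit $b$, $\bar b=1-b$. For integers $i,j$, $i\oplus j$ denotes their bitwise exclusive-or. The symbol probabilities are $P_i=\prod_{k=0}^{m-1}P_{C_k}(n_{i,k})$. The Hadamard coefficients are $h_{i,j}=\prod_{k=0}^{m-1}(-1)^{n_{i,k}n_{j,k}}$. The coefficients $\gamma_{i,j}$ are defined by $$\gamma_{i,j}=\prod_{k=0}^{m-1}\Big[(-1)^{\bar n_{i,k}n_{j,k}}\sqrt{P_{C_k}(0)}+(-1)^{n_{i,k}\bar n_{j,k}}\sqrt{P_{C_k}(1)}\Big].$$ *)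

theory Defs
  imports "HOL-Analysis.Analysis"
begin

definition nbit :: "nat \<Rightarrow> nat \<Rightarrow> nat" where
  "nbit i k = (i div 2 ^ k) mod 2"

definition bcompl :: "nat \<Rightarrow> nat" where
  "bcompl b = 1 - b"

definition PC :: "(nat \<Rightarrow> real) \<Rightarrow> nat \<Rightarrow> nat \<Rightarrow> real" where
  "PC p0 k b = (if b = 0 then p0 k else 1 - p0 k)"

definition Psym :: "nat \<Rightarrow> (nat \<Rightarrow> real) \<Rightarrow> nat \<Rightarrow> real" where
  "Psym m p0 i = (\<Prod>k<m. PC p0 k (nbit i k))"

definition hcoef :: "nat \<Rightarrow> nat \<Rightarrow> nat \<Rightarrow> real" where
  "hcoef m i j = (\<Prod>k<m. (-1) ^ (nbit i k * nbit j k))"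

definition gamma :: "nat \<Rightarrow> (nat \<Rightarrow> real) \<Rightarrow> nat \<Rightarrow> nat \<Rightarrow> real" where
  "gamma m p0 i j = (\<Prod>k<m.
      (-1) ^ (bcompl (nbit i k) * nbit j k) * sqrt (PC p0 k 0)
    + (-1) ^ (nbit i k * bcompl (nbit j k)) * sqrt (PC p0 k 1))"

end

theory Submission
  imports Defs
begin

lemma nbit_bit: "nbit i k = (if bit i k then 1 else 0)"
  unfolding nbit_def bit_iff_odd by (auto simp: odd_iff_mod_2_eq_one even_iff_mod_2_eq_zero)

lemma nbit_le1: "nbit i k = 0 \<or> nbit i k = 1"
  by (simp add: nbit_bit)

lemma nbit_add_low:
  assumes "k < m" shows "nbit (i + 2^m) k = nbit i k"
proof -
  have "(i + 2^m) div 2^k = i div 2^k + 2^(m-k)"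
  proof -
    have "(2::nat)^m = 2^k * 2^(m-k)" using assms by (simp add: power_add[symmetric])
    thus ?thesis by simp
  qed
  moreover have "(2::nat)^(m-k) = 2*2^(m-k-1)" using assms
    by (metis Suc_diff_Suc power_Suc zero_less_diff diff_Suc_1 Suc_pred)
  ultimately show ?thesis unfolding nbit_def by simp
qed

lemma nbit_top0: "i < 2^m \<Longrightarrow> nbit i m = 0"
  unfolding nbit_def by simp

lemma nbit_top1: "i < 2^m \<Longrightarrow> nbit (i + 2^m) m = 1"
  unfolding nbit_def by simp

lemma sum_prod_bits:
  fixes f :: "nat \<Rightarrow> nat \<Rightarrow> real"
  shows "(\<Sum>i<2^m. \<Prod>k<m. f k (nbit i k)) = (\<Prod>k<m. f k 0 + f k 1)"
proof (induction m)
  case 0 then show ?case by simp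
next
  case (Suc m)
  have split: "{..<(2::nat)^Suc m} = {..<2^m} \<union> (\<lambda>i. i + 2^m) ` {..<2^m}"
  proof (rule set_eqI, rule iffI)
    fix x assume "x \<in> {..<(2::nat)^Suc m}"
    then show "x \<in> {..<2^m} \<union> (\<lambda>i. i + 2^m) ` {..<2^m}"
      by (cases "x < 2^m") (auto intro!: image_eqI[where x="x - 2^m"])
  qed auto
  have disj: "{..<(2::nat)^m} \<inter> (\<lambda>i. i + 2^m) ` {..<2^m} = {}" by auto
  have "(\<Sum>i<2^Suc m. \<Prod>k<Suc m. f k (nbit i k))
     = (\<Sum>i<2^m. \<Prod>k<Suc m. f k (nbit i k)) + (\<Sum>i<2^m. \<Prod>k<Suc m. f k (nbit (i+2^m) k))"
    unfolding split by (subst sum.union_disjoint) (auto simp: sum.reindex inj_on_def)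
  also have "(\<Sum>i<2^m. \<Prod>k<Suc m. f k (nbit i k)) = (\<Sum>i<2^m. (\<Prod>k<m. f k (nbit i k)) * f m 0)"
    by (rule sum.cong) (auto simp: nbit_top0)
  also have "(\<Sum>i<2^m. \<Prod>k<Suc m. f k (nbit (i+2^m) k)) = (\<Sum>i<2^m. (\<Prod>k<m. f k (nbit i k)) * f m 1)"
    by (rule sum.cong) (auto simp: nbit_top1 nbit_add_low)
  finally show ?case using Suc by (simp add: sum_distrib_right[symmetric] distrib_left)
qed

lemma sqrt_prod: "finite A \<Longrightarrow> sqrt (prod f A) = (\<Prod>x\<in>A. sqrt (f x))"
  by (induction A rule: finite_induct) (auto simp: real_sqrt_mult)

definition g :: "(nat \<Rightarrow> real) \<Rightarrow> nat \<Rightarrow> nat \<Rightarrow> nat \<Rightarrow> real" where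
  "g p0 k a b = (-1) ^ (bcompl a * b) * sqrt (PC p0 k 0) + (-1) ^ (a * bcompl b) * sqrt (PC p0 k 1)"

lemma bit_orth:
  assumes "0 < p0 k" "p0 k < 1" "b = 0 \<or> b = 1" "c = 0 \<or> c = 1"
  shows "g p0 k 0 c * g p0 k 0 b + g p0 k 1 c * g p0 k 1 b = (if b = c then 2 else 0)"
proof -
  have s0: "sqrt (p0 k) * sqrt (p0 k) = p0 k" using assms by simp
  have s1: "sqrt (1 - p0 k) * sqrt (1 - p0 k) = 1 - p0 k" using assms by simp
  show ?thesis using assms
    by (auto simp: g_def bcompl_def PC_def algebra_simps s0 s1)
qed

lemma bit_had:
  assumes "0 < p0 k" "p0 k < 1" "b = 0 \<or> b = 1" "c = 0 \<or> c = 1"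
  shows "(-1) ^ (c * 0) * g p0 k 0 b + (-1) ^ (c * 1) * g p0 k 1 b
     = 2 * (-1) ^ (b * c) * sqrt (PC p0 k (if b = c then 0 else 1))"
  using assms by (auto simp: g_def bcompl_def PC_def algebra_simps)

lemma nbit_xor: "nbit (xor j l) k = (if nbit j k = nbit l k then 0 else 1)"
  by (auto simp: nbit_bit bit_xor_iff)

lemma diff_bit:
  assumes "j \<noteq> l" "j < 2^m" "l < (2::nat)^m"
  shows "\<exists>k<m. nbit j k \<noteq> nbit l k"
proof -
  obtain n where n: "bit j n \<noteq> bit l n" using assms(1) bit_eq_iff by blast
  have "n < m"
  proof (rule ccontr)
    assume "\<not> n < m"
    hence "\<not> bit j n" "\<not> bit l n" using assms(2,3)
      by (auto simp: bit_iff_odd dest!: order.strict_trans2[OF _ power_increasing[of m n 2]])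
    thus False using n by simp
  qed
  thus ?thesis using n by (auto simp: nbit_bit)
qed

theorem lemma1:
  fixes m :: nat and p0 :: "nat \<Rightarrow> real" and j l :: nat
  assumes "m \<ge> 1"
    and "\<And>k. k < m \<Longrightarrow> 0 < p0 k \<and> p0 k < 1"
    and "j < 2 ^ m" and "l < 2 ^ m"
  shows "(\<Sum>i<2 ^ m. gamma m p0 i l * gamma m p0 i j) = (if j = l then 2 ^ m else 0)
    \<and> (\<Sum>i<2 ^ m. hcoef m l i * gamma m p0 i j)
        = 2 ^ m * hcoef m j l * sqrt (Psym m p0 (xor j l))"
proof
  have gam: "gamma m p0 i j = (\<Prod>k<m. g p0 k (nbit i k) (nbit j k))" for i j
    unfolding gamma_def g_def ..
  have "(\<Sum>i<2 ^ m. gamma m p0 i l * gamma m p0 i j)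
      = (\<Sum>i<2 ^ m. \<Prod>k<m. (\<lambda>k a. g p0 k a (nbit l k) * g p0 k a (nbit j k)) k (nbit i k))"
    by (simp add: gam prod.distrib)
  also have "\<dots> = (\<Prod>k<m. g p0 k 0 (nbit l k) * g p0 k 0 (nbit j k) + g p0 k 1 (nbit l k) * g p0 k 1 (nbit j k))"
    by (rule sum_prod_bits)
  also have "\<dots> = (\<Prod>k<m. if nbit j k = nbit l k then 2 else 0)"
  proof (rule prod.cong[OF refl])
    fix k assume "k \<in> {..<m}"
    then show "g p0 k 0 (nbit l k) * g p0 k 0 (nbit j k) + g p0 k 1 (nbit l k) * g p0 k 1 (nbit j k)
       = (if nbit j k = nbit l k then 2 else 0)"
      using bit_orth[of p0 k "nbit j k" "nbit l k"] assms(2)[of k] nbit_le1[of j k] nbit_le1[of l k] by auto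
  qed
  also have "\<dots> = (if j = l then 2 ^ m else 0)"
  proof (cases "j = l")
    case True then show ?thesis by simp
  next
    case False
    then obtain k where "k < m" "nbit j k \<noteq> nbit l k" using diff_bit assms(3,4) by blast
    then show ?thesis using False by (auto intro!: prod_zero)
  qed
  finally show "(\<Sum>i<2 ^ m. gamma m p0 i l * gamma m p0 i j) = (if j = l then 2 ^ m else 0)" .
next
  have gam: "gamma m p0 i j = (\<Prod>k<m. g p0 k (nbit i k) (nbit j k))" for i j
    unfolding gamma_def g_def ..
  have "(\<Sum>i<2 ^ m. hcoef m l i * gamma m p0 i j)
      = (\<Sum>i<2 ^ m. \<Prod>k<m. (\<lambda>k a. (-1) ^ (nbit l k * a) * g p0 k a (nbit j k)) k (nbit i k))"
    by (simp add: gam hcoef_def prod.distrib)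
  also have "\<dots> = (\<Prod>k<m. (-1) ^ (nbit l k * 0) * g p0 k 0 (nbit j k) + (-1) ^ (nbit l k * 1) * g p0 k 1 (nbit j k))"
    by (rule sum_prod_bits)
  also have "\<dots> = (\<Prod>k<m. 2 * (-1) ^ (nbit j k * nbit l k) * sqrt (PC p0 k (nbit (xor j l) k)))"
    unfolding nbit_xor
  proof (rule prod.cong[OF refl])
    fix k assume "k \<in> {..<m}"
    then show "(-1) ^ (nbit l k * 0) * g p0 k 0 (nbit j k) + (-1) ^ (nbit l k * 1) * g p0 k 1 (nbit j k)
       = 2 * (-1) ^ (nbit j k * nbit l k) * sqrt (PC p0 k (if nbit j k = nbit l k then 0 else 1))"
      using bit_had[of p0 k "nbit j k" "nbit l k"] assms(2)[of k] nbit_le1[of j k] nbit_le1[of l k] by auto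
  qed
  also have "\<dots> = 2 ^ m * hcoef m j l * sqrt (Psym m p0 (xor j l))"
    by (simp add: prod.distrib hcoef_def Psym_def sqrt_prod)
  finally show "(\<Sum>i<2 ^ m. hcoef m l i * gamma m p0 i j) = 2 ^ m * hcoef m j l * sqrt (Psym m p0 (xor j l))" .
qed

end
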